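(* Let $\Omega\subset\mathbb{R}^N$ be a bounded open set and let $p,q:\Omega\to[1,\infty)$ be measurable with $q(x)\le p(x)\le p_+<\infty$ for all $x\in\Omega$. Let $s(x)=\frac{1}{p(x)-q(x)}\in(0,\infty]$ (with $s(x)=\infty$ where $p(x)=q(x)$). If $$\int_0^{|\Omega|}a^{s^*(t)}\,dt<\infty\quad\text{for all } a>1,$$ then $L^{p(\cdot)}(\Omega)$ is almost-compactly embedded in $L^{q(\cdot)}(\Omega)$.
   Context: $|\cdot|$ is Lebesgue measure. For a measurable function $u$ on $\Omega$ (possibly extended-valued), its non-increasing rearrangement is $u^*(t)=\inf\{\lambda>0:\ |\{x\in\Omega:|u(x)|>\lambda\}|\le t\}$, $t\ge0$. For measurable $e:\Omega\to[1,\infty)$, $\|u\|_{e(\cdot)}=\inf\{\lambda>0:\int_\Omega|u(x)/\lambda|^{e(x)}dx\le1\}$ and $L^{e(\cdot)}(\Omega)$ is the set of measurable $u$ with finite norm. Almost-compact embedding: for Banach function spaces $X,Y$ on $\Omega$, $X$ is almost-compactly embedded in $Y$ if for every sequence $\{E_n\}$ of measurable subsets of $\Omega$ with $\chi_{E_n}\to0$ pointwise a.e. one has $\lim_{n\to\infty}\sup_{\|u\|_X\le1}\|u\chi_{E_n}\|_Y=0$. *)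

theory Defs
  imports "HOL-Analysis.Analysis"
begin

definition rearrangement :: "'a::euclidean_space set \<Rightarrow> ('a \<Rightarrow> ereal) \<Rightarrow> real \<Rightarrow> ereal" where
  "rearrangement \<Omega> u t =
     Inf (ereal ` {l::real. l > 0 \<and>
        emeasure lebesgue {x\<in>\<Omega>. \<bar>u x\<bar> > ereal l} \<le> ennreal t})"

text \<open>Variable-exponent Luxemburg norm (value infinity if the defining set is empty).\<close>
definition var_norm :: "'a::euclidean_space set \<Rightarrow> ('a \<Rightarrow> real) \<Rightarrow> ('a \<Rightarrow> real) \<Rightarrow> ennreal" where
  "var_norm \<Omega> e u =
     Inf (ennreal ` {l::real. l > 0 \<and>
        (\<integral>\<^sup>+ x. ennreal (\<bar>u x / l\<bar> powr e x) * indicator \<Omega> x \<partial>lebesgue) \<le> 1})"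

definition meas_on :: "'a::euclidean_space set \<Rightarrow> ('a \<Rightarrow> real) \<Rightarrow> bool" where
  "meas_on \<Omega> u \<longleftrightarrow> u \<in> borel_measurable (restrict_space lebesgue \<Omega>)"

definition var_Lebesgue :: "'a::euclidean_space set \<Rightarrow> ('a \<Rightarrow> real) \<Rightarrow> ('a \<Rightarrow> real) set" where
  "var_Lebesgue \<Omega> e = {u. meas_on \<Omega> u \<and> var_norm \<Omega> e u < \<infinity>}"

definition almost_compact_embedding ::
  "'a::euclidean_space set \<Rightarrow> ('a \<Rightarrow> real) \<Rightarrow> ('a \<Rightarrow> real) \<Rightarrow> bool" where
  "almost_compact_embedding \<Omega> p q \<longleftrightarrow>
     (\<forall>E :: nat \<Rightarrow> 'a set.
        (\<forall>n. E n \<in> sets lebesgue \<and> E n \<subseteq> \<Omega>) \<longrightarrow>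
        (AE x in lebesgue. (\<lambda>n. indicator (E n) x :: real) \<longlonglongrightarrow> 0) \<longrightarrow>
        (\<lambda>n. SUP u\<in>{u \<in> var_Lebesgue \<Omega> p. var_norm \<Omega> p u \<le> 1}.
              var_norm \<Omega> q (\<lambda>x. u x * indicator (E n) x)) \<longlonglongrightarrow> 0)"

definition epow :: "real \<Rightarrow> ereal \<Rightarrow> ennreal" where
  "epow a e = (if e = \<infinity> then \<infinity> else ennreal (a powr real_of_ereal e))"

end

theory Submission
  imports Defs
begin

lemma young_aux:
  fixes u p q P l :: real
  assumes q1: "1 \<le> q" and qp: "q < p" and pP: "p \<le> P" and l0: "0 < l" and l1: "l \<le> 1"
  shows "(\<bar>u\<bar> / l) powr q \<le> 2 powr (-(P+1)) * \<bar>u\<bar> powr p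
     + (2 + 2 powr ((P+1)*P) * l powr (-(P*P))) powr (1/(p-q))"
proof -
  define d where "d = (2::real) powr (-(P+1))"
  define ss where "ss = 1/(p-q)"
  have d0: "d > 0" by (simp add: d_def)
  have s0: "ss > 0" using qp by (simp add: ss_def)
  define B where "B = l powr (-q) / d"
  have B0: "B > 0" using d0 l0 by (simp add: B_def)
  have base: "(\<bar>u\<bar> / l) powr q = \<bar>u\<bar> powr q * l powr (-q)"
    using l0 by (simp add: powr_divide powr_minus divide_simps)
  have key: "(B powr ss) powr q * l powr (-q) = (d powr (-q) * l powr (-(p*q))) powr ss"
  proof -
    have "(B powr ss) powr q * l powr (-q) = (l powr (-q) / d) powr (ss*q) * l powr (-q)"
      by (simp only: B_def powr_powr)
    also have "... = l powr (-(q * ss*q)) * d powr (-(ss*q)) * l powr (-q)"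
    proof -
      have "(l powr (-q) / d) powr (ss * q) = (l powr (-q)) powr (ss * q) / d powr (ss * q)"
        using d0 by (intro powr_divide) 
      also have "... = l powr (-(q * ss * q)) * d powr (-(ss * q))"
        by (simp only: powr_powr) (simp add: powr_minus divide_inverse mult_ac)
      finally show ?thesis by simp
    qed
    also have "... = l powr (-(q * ss*q) - q) * d powr (-(ss*q))"
    proof -
      have "l powr (-(q * ss * q) - q) = l powr (-(q * ss * q)) * l powr (-q)"
        by (metis diff_conv_add_uminus powr_add)
      then show ?thesis by (simp only: mult_ac)
    qed
    also have "-(q * ss*q) - q = -(p*q) * ss" using qp by (simp add: ss_def field_simps)
    also have "(d powr (-q) * l powr (-(p*q))) powr ss = l powr (-(p*q) * ss) * d powr (-(ss*q))"
      using l0 d0 by (simp add: powr_mult powr_powr mult_ac)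
    finally show ?thesis by simp
  qed
  have mono: "(d powr (-q) * l powr (-(p*q))) powr ss \<le> (2 + 2 powr ((P+1)*P) * l powr (-(P*P))) powr ss"
  proof (rule powr_mono2)
    show "0 \<le> ss" using s0 by simp
    show "0 \<le> d powr (-q) * l powr (-(p*q))" by simp
    have a: "d powr (-q) \<le> 2 powr ((P+1)*P)"
    proof -
      have "(P+1)*q \<le> (P+1)*P" using q1 qp pP by (intro mult_left_mono) auto
      then have "- ((- P - 1) * q) \<le> (P + 1) * P" by (simp add: algebra_simps)
      then show ?thesis unfolding d_def by (simp add: powr_powr)
    qed
    have b: "l powr (-(p*q)) \<le> l powr (-(P*P))"
      by (rule powr_mono') (use l0 l1 q1 qp pP in \<open>auto intro!: mult_mono\<close>)
    have "d powr (-q) * l powr (-(p*q)) \<le> 2 powr ((P+1)*P) * l powr (-(P*P))"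
      by (rule mult_mono[OF a b]) auto
    then show "d powr (-q) * l powr (-(p*q)) \<le> 2 + 2 powr ((P+1)*P) * l powr (-(P*P))" by simp
  qed
  show ?thesis
  proof (cases "\<bar>u\<bar> powr (p-q) \<ge> B")
    case True
    then have u0: "\<bar>u\<bar> > 0" using B0 by (metis abs_ge_zero less_eq_real_def not_le powr_0)
    have "(\<bar>u\<bar> / l) powr q = \<bar>u\<bar> powr q * (d * B)" using base d0 by (simp add: B_def)
    also have "... \<le> \<bar>u\<bar> powr q * (d * \<bar>u\<bar> powr (p-q))"
      using True d0 by (intro mult_left_mono) auto
    also have "... = d * \<bar>u\<bar> powr p" using u0 by (simp add: powr_diff field_simps)
    finally show ?thesis unfolding d_def ss_def by (smt (verit) powr_ge_zero)
  next
    case False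
    have "\<bar>u\<bar> \<le> B powr ss"
    proof -
      have "\<bar>u\<bar> = (\<bar>u\<bar> powr (p-q)) powr ss" using qp by (simp add: ss_def powr_powr)
      also have "... \<le> B powr ss" using False s0 by (intro powr_mono2) auto
      finally show ?thesis .
    qed
    then have "\<bar>u\<bar> powr q \<le> (B powr ss) powr q" using q1 by (intro powr_mono2) auto
    then have "(\<bar>u\<bar> / l) powr q \<le> (B powr ss) powr q * l powr (-q)"
      using base by (simp add: mult_right_mono)
    also have "... \<le> (2 + 2 powr ((P+1)*P) * l powr (-(P*P))) powr ss" using key mono by simp
    finally have "(\<bar>u\<bar> / l) powr q \<le> (2 + 2 powr ((P+1)*P) * l powr (-(P*P))) powr ss" .
    moreover have "0 \<le> 2 powr (-(P+1)) * \<bar>u\<bar> powr p" by simp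
    ultimately show ?thesis unfolding ss_def by linarith
  qed
qed

definition cc :: "real \<Rightarrow> nat \<Rightarrow> real" where
  "cc a k = (if k = 0 then 1 else a^k - a^(k-1))"

lemma cc_nonneg: "1 \<le> a \<Longrightarrow> 0 \<le> cc a k"
  by (cases k) (auto simp: cc_def intro: power_increasing)

lemma sum_cc: "(\<Sum>k<Suc n. cc a k) = a^n"
  by (induction n) (auto simp: cc_def)

lemma claim1:
  fixes a :: real and e :: ereal
  assumes a: "a > 1" and e: "e > 0"
  shows "epow a e \<le> ennreal a * (\<Sum>k. ennreal (cc a k) * (if ereal (real k) < e then 1 else 0))"
proof (cases e)
  case (real r)
  define K where "K = nat (\<lceil>r\<rceil> - 1)"
  have r0: "r > 0" using e real by simp
  have Kr: "real K < r" "r \<le> real K + 1" unfolding K_def using r0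
    by (auto simp: of_nat_nat) (linarith+)
  have "(\<Sum>k<Suc K. ennreal (cc a k) * (if ereal (real k) < e then 1 else 0))
      \<le> (\<Sum>k. ennreal (cc a k) * (if ereal (real k) < e then 1 else 0))"
    by (rule sum_le_suminf) auto
  moreover have "(\<Sum>k<Suc K. ennreal (cc a k) * (if ereal (real k) < e then 1 else 0))
      = ennreal (a^K)"
  proof -
    have "(\<Sum>k<Suc K. ennreal (cc a k) * (if ereal (real k) < e then 1 else 0))
        = (\<Sum>k<Suc K. ennreal (cc a k))"
      using Kr real by (intro sum.cong) auto
    also have "... = ennreal (\<Sum>k<Suc K. cc a k)" using a cc_nonneg[of a]
      by (intro sum_ennreal) auto
    finally show ?thesis by (simp only: sum_cc)
  qed
  ultimately have "ennreal (a^K) \<le> (\<Sum>k. ennreal (cc a k) * (if ereal (real k) < e then 1 else 0))"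
    by simp
  then have m1: "ennreal a * ennreal (a^K) \<le> ennreal a * (\<Sum>k. ennreal (cc a k) * (if ereal (real k) < e then 1 else 0))"
    by (rule mult_left_mono) auto
  have m2: "a powr r \<le> a * a^K"
  proof -
    have "a powr r \<le> a powr (real K + 1)" using a Kr by (intro powr_mono) auto
    also have "... = a * a^K" using a by (simp add: powr_add powr_realpow)
    finally show ?thesis .
  qed
  have m3: "ennreal (a powr r) \<le> ennreal a * ennreal (a^K)"
    using m2 a by (simp add: ennreal_mult[symmetric] ennreal_leI)
  have "ennreal (a powr r) \<le> ennreal a * (\<Sum>k. ennreal (cc a k) * (if ereal (real k) < e then 1 else 0))"
    using m3 m1 by (rule order_trans)
  moreover have "epow a e = ennreal (a powr r)" using real by (simp add: epow_def)
  ultimately show ?thesis by simp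
next
  case PInf
  have "(\<Sum>k. ennreal (cc a k) * (if ereal (real k) < e then 1 else 0)) = \<infinity>"
  proof (rule ccontr)
    assume "(\<Sum>k. ennreal (cc a k) * (if ereal (real k) < e then 1 else 0)) \<noteq> \<infinity>"
    then obtain y where y: "(\<Sum>k. ennreal (cc a k) * (if ereal (real k) < e then 1 else 0)) = ennreal y"
      by (cases "(\<Sum>k. ennreal (cc a k) * (if ereal (real k) < e then 1 else 0))" rule: ennreal_cases) auto
    obtain n where n: "y < a^n" using real_arch_pow[OF a] by blast
    have "(\<Sum>k<Suc n. ennreal (cc a k) * (if ereal (real k) < e then 1 else 0)) = ennreal (a^n)"
    proof -
      have "(\<Sum>k<Suc n. ennreal (cc a k) * (if ereal (real k) < e then 1 else 0))
          = (\<Sum>k<Suc n. ennreal (cc a k))" using PInf by (intro sum.cong) auto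
      also have "... = ennreal (\<Sum>k<Suc n. cc a k)" using a cc_nonneg[of a]
        by (intro sum_ennreal) auto
      finally show ?thesis by (simp only: sum_cc)
    qed
    moreover have "(\<Sum>k<Suc n. ennreal (cc a k) * (if ereal (real k) < e then 1 else 0))
      \<le> (\<Sum>k. ennreal (cc a k) * (if ereal (real k) < e then 1 else 0))"
      by (rule sum_le_suminf) auto
    ultimately have "ennreal (a^n) \<le> ennreal y" using y by simp
    moreover have "a^n > 0" using a by simp
    ultimately show False using n unfolding ennreal_le_iff2 by linarith
  qed
  then show ?thesis using a PInf by (simp add: epow_def ennreal_mult_top)
next
  case MInf then show ?thesis using e by simp
qed

lemma claim2:
  fixes a :: real and r :: ereal
  assumes a: "a > 1" and r0: "0 \<le> r" and P: "\<And>k. P k \<Longrightarrow> ereal (real k) \<le> r"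
  shows "(\<Sum>k. ennreal (cc a k) * (if P k then 1 else 0)) \<le> epow a r"
proof (cases r)
  case (real s)
  define K where "K = nat \<lfloor>s\<rfloor>"
  have s0: "s \<ge> 0" using r0 real by simp
  have PK: "P k \<Longrightarrow> k \<le> K" for k using P[of k] real s0 unfolding K_def
    by (simp add: le_nat_floor)
  have "(\<Sum>k. ennreal (cc a k) * (if P k then 1 else 0)) = (\<Sum>k\<in>{..<Suc K}. ennreal (cc a k) * (if P k then 1 else 0))"
    by (rule suminf_finite) (auto dest: PK)
  also have "... \<le> (\<Sum>k\<in>{..<Suc K}. ennreal (cc a k))"
    by (intro sum_mono) auto
  also have "... = ennreal (\<Sum>k<Suc K. cc a k)" using a cc_nonneg[of a]
    by (subst sum_ennreal) auto
  also have "... = ennreal (a^K)" by (simp only: sum_cc)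
  also have "... \<le> ennreal (a powr s)"
  proof -
    have "real K \<le> s" unfolding K_def using s0 by simp
    then have "a powr real K \<le> a powr s" using a by (intro powr_mono) auto
    then show ?thesis using a by (simp add: powr_realpow)
  qed
  finally show ?thesis using real by (simp add: epow_def)
next
  case PInf then show ?thesis by (simp add: epow_def)
next
  case MInf then show ?thesis using r0 by simp
qed


lemma stepA:
  fixes \<Omega> :: "'a::euclidean_space set" and p q :: "'a \<Rightarrow> real" and a :: real
  defines "S \<equiv> (\<lambda>x. if p x = q x then \<infinity> else ereal (1 / (p x - q x)))"
  assumes Om: "\<Omega> \<in> sets lebesgue" and fin: "emeasure lebesgue \<Omega> < \<infinity>"
    and [measurable]: "p \<in> borel_measurable (restrict_space lebesgue \<Omega>)"
    and [measurable]: "q \<in> borel_measurable (restrict_space lebesgue \<Omega>)"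
    and pq: "\<And>x. x \<in> \<Omega> \<Longrightarrow> q x \<le> p x"
    and a: "a > 1"
    and hyp: "(\<integral>\<^sup>+ t \<in> {0..measure lebesgue \<Omega>}. epow a (rearrangement \<Omega> S t) \<partial>lborel) < \<infinity>"
  shows "(\<integral>\<^sup>+ x. epow a (S x) \<partial>restrict_space lebesgue \<Omega>) < \<infinity>"
proof -
  let ?R = "restrict_space lebesgue \<Omega>"
  define M where "M = measure lebesgue \<Omega>"
  have OmR: "\<Omega> \<inter> space lebesgue \<in> sets lebesgue" using Om by simp
  have spR: "space ?R = \<Omega>" by (simp add: space_restrict_space)
  define m where "m k = emeasure lebesgue {x\<in>\<Omega>. \<bar>S x\<bar> > ereal (real k)}" for k :: nat
  have Sset[measurable]: "{x\<in>\<Omega>. ereal c < S x} \<in> sets ?R" for c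
  proof -
    have "{x \<in> space ?R. ereal c < S x} \<in> sets ?R" unfolding S_def by measurable
    then show ?thesis by (simp add: spR)
  qed
  have Sset2: "{x\<in>\<Omega>. ereal c < S x} \<in> sets lebesgue" for c
    using Sset[of c] sets_restrict_space_iff[OF OmR] by blast
  have Spos: "x \<in> \<Omega> \<Longrightarrow> S x > 0" for x using pq[of x] by (auto simp: S_def)
  have absS: "x \<in> \<Omega> \<Longrightarrow> \<bar>S x\<bar> = S x" for x using Spos[of x] by (simp add: abs_ereal_pos)
  have mset: "{x\<in>\<Omega>. \<bar>S x\<bar> > ereal c} = {x\<in>\<Omega>. ereal c < S x}" for c using absS by auto
  have mle: "m k \<le> ennreal M" for k
  proof -
    have "m k \<le> emeasure lebesgue \<Omega>" unfolding m_def mset by (rule emeasure_mono) (use Om in auto)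
    then show ?thesis using fin by (simp add: M_def emeasure_eq_ennreal_measure)
  qed
  define \<mu> where "\<mu> k = enn2real (m k)" for k
  have mu: "m k = ennreal (\<mu> k)" "0 \<le> \<mu> k" "\<mu> k \<le> M" for k
  proof -
    have fk: "m k < \<infinity>" by (rule le_less_trans[OF mle[of k]]) simp
    then show "m k = ennreal (\<mu> k)" unfolding \<mu>_def by (simp add: ennreal_enn2real)
    show "0 \<le> \<mu> k" unfolding \<mu>_def by (rule enn2real_nonneg)
    have M0: "M \<ge> 0" unfolding M_def by (rule measure_nonneg)
    have "enn2real (m k) \<le> enn2real (ennreal M)" by (rule enn2real_mono[OF mle]) simp
    then show "\<mu> k \<le> M" unfolding \<mu>_def using M0 by simp
  qed
  have A1: "(\<integral>\<^sup>+ x. epow a (S x) \<partial>?R) \<le> ennreal a * (\<Sum>k. ennreal (cc a k) * m k)"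
  proof -
    have "(\<integral>\<^sup>+ x. epow a (S x) \<partial>?R) \<le> (\<integral>\<^sup>+ x. ennreal a * (\<Sum>k. ennreal (cc a k) * indicator {x\<in>\<Omega>. ereal (real k) < S x} x) \<partial>?R)"
    proof (intro nn_integral_mono)
      fix x assume "x \<in> space ?R"
      then have x: "x \<in> \<Omega>" by (simp add: spR)
      have "(\<lambda>k. ennreal (cc a k) * indicator {x\<in>\<Omega>. ereal (real k) < S x} x) = (\<lambda>k. ennreal (cc a k) * (if ereal (real k) < S x then 1 else 0))"
        using x by (auto simp: indicator_def)
      then show "epow a (S x) \<le> ennreal a * (\<Sum>k. ennreal (cc a k) * indicator {x\<in>\<Omega>. ereal (real k) < S x} x)"
        using claim1[OF a Spos[OF x]] by simp
    qed
    also have "... = ennreal a * (\<integral>\<^sup>+ x. (\<Sum>k. ennreal (cc a k) * indicator {x\<in>\<Omega>. ereal (real k) < S x} x) \<partial>?R)"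
      by (rule nn_integral_cmult) measurable
    also have "(\<integral>\<^sup>+ x. (\<Sum>k. ennreal (cc a k) * indicator {x\<in>\<Omega>. ereal (real k) < S x} x) \<partial>?R)
        = (\<Sum>k. \<integral>\<^sup>+ x. ennreal (cc a k) * indicator {x\<in>\<Omega>. ereal (real k) < S x} x \<partial>?R)"
      by (rule nn_integral_suminf) measurable
    also have "... = (\<Sum>k. ennreal (cc a k) * m k)"
    proof (rule suminf_cong)
      fix k
      show "(\<integral>\<^sup>+ x. ennreal (cc a k) * indicator {x\<in>\<Omega>. ereal (real k) < S x} x \<partial>?R) = ennreal (cc a k) * m k"
        unfolding m_def mset
        by (subst nn_integral_cmult_indicator[OF Sset]) (subst emeasure_restrict_space[OF OmR], auto)
    qed
    finally show ?thesis .
  qed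
  have r0: "0 \<le> rearrangement \<Omega> S t" for t
    unfolding rearrangement_def by (rule Inf_greatest) auto
  have rk: "ereal (real k) \<le> rearrangement \<Omega> S t" if t0: "0 \<le> t" and tk: "t < \<mu> k" for t k
    unfolding rearrangement_def
  proof (rule Inf_greatest)
    fix y assume "y \<in> ereal ` {l. 0 < l \<and> emeasure lebesgue {x \<in> \<Omega>. ereal l < \<bar>S x\<bar>} \<le> ennreal t}"
    then obtain l where y: "y = ereal l" and l: "emeasure lebesgue {x \<in> \<Omega>. ereal l < \<bar>S x\<bar>} \<le> ennreal t"
      by auto
    show "ereal (real k) \<le> y"
    proof (rule ccontr)
      assume "\<not> ereal (real k) \<le> y"
      then have lk: "l < real k" using y by simp
      have "m k \<le> emeasure lebesgue {x \<in> \<Omega>. ereal l < \<bar>S x\<bar>}"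
        unfolding m_def mset using lk Sset2[of l]
        by (intro emeasure_mono) (auto elim: order.strict_trans[rotated])
      also have "... \<le> ennreal t" by (rule l)
      finally have "ennreal (\<mu> k) \<le> ennreal t" by (simp add: mu)
      then show False using tk t0 by simp
    qed
  qed
  have A2: "(\<Sum>k. ennreal (cc a k) * m k) \<le> (\<integral>\<^sup>+ t \<in> {0..M}. epow a (rearrangement \<Omega> S t) \<partial>lborel)"
  proof -
    have "(\<Sum>k. ennreal (cc a k) * m k) = (\<Sum>k. \<integral>\<^sup>+t. ennreal (cc a k) * indicator {0..<\<mu> k} t \<partial>lborel)"
      using mu by (simp add: nn_integral_cmult_indicator)
    also have "... = (\<integral>\<^sup>+t. (\<Sum>k. ennreal (cc a k) * indicator {0..<\<mu> k} t) \<partial>lborel)"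
      by (rule nn_integral_suminf[symmetric]) auto
    also have "... \<le> (\<integral>\<^sup>+ t \<in> {0..M}. epow a (rearrangement \<Omega> S t) \<partial>lborel)"
    proof (intro nn_integral_mono)
      fix t :: real
      show "(\<Sum>k. ennreal (cc a k) * indicator {0..<\<mu> k} t) \<le> epow a (rearrangement \<Omega> S t) * indicator {0..M} t"
      proof (cases "t \<in> {0..M}")
        case True
        have "(\<lambda>k. ennreal (cc a k) * indicator {0..<\<mu> k} t) = (\<lambda>k. ennreal (cc a k) * (if t < \<mu> k then 1 else 0))"
          using True by (auto simp: indicator_def)
        then show ?thesis using True claim2[OF a r0, of "\<lambda>k. t < \<mu> k" t] rk[of t] by auto
      next
        case False
        then have "indicator {0..<\<mu> k} t = (0::ennreal)" for k using mu(3)[of k]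
          by (auto simp: indicator_def)
        then show ?thesis by simp
      qed
    qed
    finally show ?thesis .
  qed
  have "(\<integral>\<^sup>+ x. epow a (S x) \<partial>?R) \<le> ennreal a * (\<integral>\<^sup>+ t \<in> {0..M}. epow a (rearrangement \<Omega> S t) \<partial>lborel)"
    using A1 A2 by (meson order_trans mult_left_mono zero_le)
  also have "... < \<infinity>" using hyp by (simp add: M_def ennreal_mult_less_top)
  finally show ?thesis .
qed


lemma half_ennreal: "ennreal (1/2) + 1/2 = (1::ennreal)"
proof -
  have h: "(1::ennreal)/2 = ennreal (1/2)" using ennreal_divide_numeral[of 1 "num.Bit0 num.One"] by simp
  have "ennreal (1/2) + ennreal (1/2) = ennreal (1/2 + 1/2)" by (rule ennreal_plus[symmetric]) auto
  then show ?thesis unfolding h by simp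
qed

theorem theorem3p4:
  fixes \<Omega> :: "'a::euclidean_space set"
    and p q :: "'a \<Rightarrow> real" and p_plus :: real
  assumes "bounded \<Omega>" and "open \<Omega>"
    and "meas_on \<Omega> p" and "meas_on \<Omega> q"
    and "\<And>x. x \<in> \<Omega> \<Longrightarrow> 1 \<le> q x \<and> q x \<le> p x \<and> p x \<le> p_plus"
    and "\<And>a. a > 1 \<Longrightarrow>
      (\<integral>\<^sup>+ t \<in> {0..measure lebesgue \<Omega>}.
          epow a (rearrangement \<Omega>
             (\<lambda>x. if p x = q x then \<infinity> else ereal (1 / (p x - q x))) t) \<partial>lborel) < \<infinity>"
  shows "almost_compact_embedding \<Omega> p q"
proof -
  note bnd = assms(1) and opn = assms(2) and pqP = assms(5) and hyp = assms(6)
  define S where "S = (\<lambda>x. if p x = q x then \<infinity> else ereal (1 / (p x - q x)))"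
  define P where "P = p_plus"
  let ?R = "restrict_space lebesgue \<Omega>"
  have Om: "\<Omega> \<in> sets lebesgue" and fin: "emeasure lebesgue \<Omega> < \<infinity>"
    using lmeasurable_open[OF bnd opn] unfolding fmeasurable_def by auto
  have OmR: "\<Omega> \<inter> space lebesgue \<in> sets lebesgue" using Om by simp
  have spR: "space ?R = \<Omega>" by (simp add: space_restrict_space)
  have pm[measurable]: "p \<in> borel_measurable ?R" using assms(3) by (simp add: meas_on_def)
  have qm[measurable]: "q \<in> borel_measurable ?R" using assms(4) by (simp add: meas_on_def)
  have intA: "(\<integral>\<^sup>+ x. epow a (S x) \<partial>?R) < \<infinity>" if a: "a > 1" for a
    unfolding S_def
    by (rule stepA[OF Om fin pm qm _ a hyp[OF a]]) (use pqP in auto)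
  have epowS: "epow a (S x) = (if p x = q x then \<infinity> else ennreal (a powr (1 / (p x - q x))))" for a x
    by (simp add: S_def epow_def)
  have epm[measurable]: "(\<lambda>x. epow a (S x)) \<in> borel_measurable ?R" for a
    unfolding epowS by measurable
  show ?thesis
    unfolding almost_compact_embedding_def
  proof (intro allI impI)
    fix E :: "nat \<Rightarrow> 'a set"
    assume E: "\<forall>n. E n \<in> sets lebesgue \<and> E n \<subseteq> \<Omega>"
    assume AEc: "AE x in lebesgue. (\<lambda>n. indicator (E n) x :: real) \<longlonglongrightarrow> 0"
    have ER[measurable]: "E n \<in> sets ?R" for n using E sets_restrict_space_iff[OF OmR] by blast
    define U where "U = {u \<in> var_Lebesgue \<Omega> p. var_norm \<Omega> p u \<le> 1}"
    define F where "F n = (SUP u\<in>U. var_norm \<Omega> q (\<lambda>x. u x * indicator (E n) x))" for n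
    have AER: "AE x in ?R. (\<lambda>n. indicator (E n) x :: real) \<longlonglongrightarrow> 0"
      unfolding AE_restrict_space_iff[OF OmR] using AEc by eventually_elim auto
    have conv: "(\<lambda>n. \<integral>\<^sup>+ x. epow a (S x) * indicator (E n) x \<partial>?R) \<longlonglongrightarrow> 0" if a: "a > 1" for a
    proof -
      have "(\<lambda>n. \<integral>\<^sup>+ x. epow a (S x) * indicator (E n) x \<partial>?R) \<longlonglongrightarrow> (\<integral>\<^sup>+ x. 0 \<partial>?R)"
      proof (rule nn_integral_dominated_convergence[where w="\<lambda>x. epow a (S x)"])
        show "\<And>i. (\<lambda>x. epow a (S x) * indicator (E i) x) \<in> borel_measurable ?R" by measurable
        show "(\<lambda>x. 0::ennreal) \<in> borel_measurable ?R" by measurable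
        show "(\<lambda>x. epow a (S x)) \<in> borel_measurable ?R" by measurable
        show "AE x in ?R. epow a (S x) * indicator (E j) x \<le> epow a (S x)" for j
          by (intro AE_I2) (auto simp: indicator_def)
        show "(\<integral>\<^sup>+ x. epow a (S x) \<partial>?R) < \<infinity>" by (rule intA[OF a])
        show "AE x in ?R. (\<lambda>i. epow a (S x) * indicator (E i) x) \<longlonglongrightarrow> 0"
          using AER
        proof eventually_elim
          fix x assume "(\<lambda>n. indicator (E n) x :: real) \<longlonglongrightarrow> 0"
          then have "eventually (\<lambda>n. indicator (E n) x < (1/2::real)) sequentially"
            by (rule order_tendstoD) simp
          then have "eventually (\<lambda>n. epow a (S x) * indicator (E n) x = (0::ennreal)) sequentially"
            by eventually_elim (auto simp: indicator_def split: if_splits)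
          then show "(\<lambda>i. epow a (S x) * indicator (E i) x) \<longlonglongrightarrow> 0"
            by (rule tendsto_eventually)
        qed
      qed
      then show ?thesis by simp
    qed
    have bound: "var_norm \<Omega> q (\<lambda>x. u x * indicator (E n) x) \<le> ennreal l"
      if l0: "0 < l" and l1: "l \<le> 1" and u: "u \<in> U"
        and small: "(\<integral>\<^sup>+ x. epow (2 + 2 powr ((P+1)*P) * l powr (-(P*P))) (S x) * indicator (E n) x \<partial>?R) \<le> 1/2"
      for l u n
    proof -
      define A where "A = 2 + 2 powr ((P+1)*P) * l powr (-(P*P))"
      define \<delta> where "\<delta> = (2::real) powr (-(P+1))"
      have uL: "meas_on \<Omega> u" and un: "var_norm \<Omega> p u \<le> 1"
        using u by (auto simp: U_def var_Lebesgue_def)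
      have um[measurable]: "u \<in> borel_measurable ?R" using uL by (simp add: meas_on_def)
      have "var_norm \<Omega> p u < 2" using un by (rule le_less_trans) simp
      then obtain l' where l'0: "0 < l'" and l'2: "ennreal l' < 2"
        and l'i: "(\<integral>\<^sup>+ x. ennreal (\<bar>u x / l'\<bar> powr p x) * indicator \<Omega> x \<partial>lebesgue) \<le> 1"
        unfolding var_norm_def Inf_less_iff by auto
      have l'2r: "l' < 2" using l'2 l'0
        by (metis ennreal_less_iff ennreal_numeral less_le zero_le_numeral)
      have I1: "(\<integral>\<^sup>+ x. ennreal (\<bar>u x\<bar> powr p x) \<partial>?R) \<le> ennreal (2 powr P)"
      proof -
        have "(\<integral>\<^sup>+ x. ennreal (\<bar>u x\<bar> powr p x) \<partial>?R) \<le> (\<integral>\<^sup>+ x. ennreal (2 powr P) * ennreal (\<bar>u x / l'\<bar> powr p x) \<partial>?R)"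
        proof (intro nn_integral_mono)
          fix x assume "x \<in> space ?R"
          then have x: "x \<in> \<Omega>" by (simp add: spR)
          have p0: "0 \<le> p x" "p x \<le> P" using pqP[OF x] by (auto simp: P_def)
          have "\<bar>u x\<bar> powr p x = (l' * \<bar>u x / l'\<bar>) powr p x" using l'0 by (simp add: abs_divide)
          also have "... = l' powr p x * \<bar>u x / l'\<bar> powr p x" by (subst powr_mult[symmetric]) (use l'0 in \<open>auto simp: abs_divide\<close>)
          also have "... \<le> 2 powr P * \<bar>u x / l'\<bar> powr p x"
          proof (rule mult_right_mono)
            have "l' powr p x \<le> 2 powr p x" using l'0 l'2r p0 by (intro powr_mono2) auto
            also have "... \<le> 2 powr P" using p0 by (intro powr_mono) auto
            finally show "l' powr p x \<le> 2 powr P" .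
          qed simp
          finally show "ennreal (\<bar>u x\<bar> powr p x) \<le> ennreal (2 powr P) * ennreal (\<bar>u x / l'\<bar> powr p x)"
            by (simp add: ennreal_mult[symmetric] ennreal_leI)
        qed
        also have "... = ennreal (2 powr P) * (\<integral>\<^sup>+ x. ennreal (\<bar>u x / l'\<bar> powr p x) \<partial>?R)"
          by (rule nn_integral_cmult) measurable
        also have "(\<integral>\<^sup>+ x. ennreal (\<bar>u x / l'\<bar> powr p x) \<partial>?R) = (\<integral>\<^sup>+ x. ennreal (\<bar>u x / l'\<bar> powr p x) * indicator \<Omega> x \<partial>lebesgue)"
          by (rule nn_integral_restrict_space[OF OmR])
        also have "ennreal (2 powr P) * ... \<le> ennreal (2 powr P) * 1"
          using l'i by (rule mult_left_mono) simp
        finally show ?thesis by simp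
      qed
      have main: "(\<integral>\<^sup>+ x. ennreal (\<bar>u x * indicator (E n) x / l\<bar> powr q x) * indicator \<Omega> x \<partial>lebesgue) \<le> 1"
      proof -
        have "(\<integral>\<^sup>+ x. ennreal (\<bar>u x * indicator (E n) x / l\<bar> powr q x) * indicator \<Omega> x \<partial>lebesgue)
            = (\<integral>\<^sup>+ x. ennreal (\<bar>u x * indicator (E n) x / l\<bar> powr q x) \<partial>?R)"
          by (rule nn_integral_restrict_space[OF OmR, symmetric])
        also have "... \<le> (\<integral>\<^sup>+ x. ennreal \<delta> * ennreal (\<bar>u x\<bar> powr p x) + epow A (S x) * indicator (E n) x \<partial>?R)"
        proof (intro nn_integral_mono)
          fix x assume "x \<in> space ?R"
          then have x: "x \<in> \<Omega>" by (simp add: spR)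
          show "ennreal (\<bar>u x * indicator (E n) x / l\<bar> powr q x) \<le> ennreal \<delta> * ennreal (\<bar>u x\<bar> powr p x) + epow A (S x) * indicator (E n) x"
          proof (cases "x \<in> E n")
            case False then show ?thesis by simp
          next
            case True
            show ?thesis
            proof (cases "p x = q x")
              case True' : True
              then show ?thesis using True by (simp add: epowS)
            next
              case False
              then have qp: "q x < p x" using pqP[OF x] by simp
              have y: "(\<bar>u x\<bar> / l) powr q x \<le> \<delta> * \<bar>u x\<bar> powr p x + A powr (1 / (p x - q x))"
                unfolding \<delta>_def A_def
                by (rule young_aux) (use pqP[OF x] qp l0 l1 in \<open>auto simp: P_def\<close>)
              have "ennreal (\<bar>u x * indicator (E n) x / l\<bar> powr q x) = ennreal ((\<bar>u x\<bar> / l) powr q x)"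
                using True l0 by (simp add: abs_divide)
              also have "... \<le> ennreal (\<delta> * \<bar>u x\<bar> powr p x + A powr (1 / (p x - q x)))"
                by (rule ennreal_leI[OF y])
              also have "... = ennreal \<delta> * ennreal (\<bar>u x\<bar> powr p x) + epow A (S x) * indicator (E n) x"
                using True False by (simp add: epowS \<delta>_def ennreal_plus ennreal_mult)
              finally show ?thesis .
            qed
          qed
        qed
        also have "... = ennreal \<delta> * (\<integral>\<^sup>+ x. ennreal (\<bar>u x\<bar> powr p x) \<partial>?R) + (\<integral>\<^sup>+ x. epow A (S x) * indicator (E n) x \<partial>?R)"
          by (subst nn_integral_add) (measurable, subst nn_integral_cmult, measurable)
        also have "... \<le> ennreal \<delta> * ennreal (2 powr P) + 1/2"
          using small I1 unfolding A_def by (intro add_mono mult_left_mono) auto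
        also have "ennreal \<delta> * ennreal (2 powr P) = ennreal (1/2)"
          unfolding \<delta>_def by (simp add: ennreal_mult[symmetric] powr_add[symmetric] powr_minus_divide)
        also have "ennreal (1/2) + 1/2 = (1::ennreal)"
          by (rule half_ennreal)
        finally show ?thesis .
      qed
      show ?thesis
        unfolding var_norm_def
        by (rule Inf_lower) (use l0 main in auto)
    qed
    show "(\<lambda>n. SUP u\<in>{u \<in> var_Lebesgue \<Omega> p. var_norm \<Omega> p u \<le> 1}.
              var_norm \<Omega> q (\<lambda>x. u x * indicator (E n) x)) \<longlonglongrightarrow> 0"
      unfolding U_def[symmetric] F_def[symmetric]
    proof (rule order_tendstoI)
      fix y :: ennreal assume "y < 0" then show "eventually (\<lambda>n. y < F n) sequentially" by simp
    next
      fix y :: ennreal assume y: "0 < y"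
      obtain l where l0: "0 < l" and l1: "l \<le> 1" and ly: "ennreal l < y"
      proof (cases y rule: ennreal_cases)
        case (real r)
        then have r0: "r > 0" using y by simp
        show ?thesis
        proof (rule that[of "min 1 (r/2)"])
          show "0 < min 1 (r/2)" using r0 by simp
          show "min 1 (r/2) \<le> 1" by simp
          show "ennreal (min 1 (r/2)) < y" using r0 real by (simp add: ennreal_lessI)
        qed
      next
        case top
        then show ?thesis by (intro that[of 1]) auto
      qed
      define A where "A = 2 + 2 powr ((P+1)*P) * l powr (-(P*P))"
      have A1: "A > 1" unfolding A_def using l0 by (smt (verit) mult_nonneg_nonneg powr_ge_zero)
      have "eventually (\<lambda>n. (\<integral>\<^sup>+ x. epow A (S x) * indicator (E n) x \<partial>?R) < 1/2) sequentially"
        using conv[OF A1] by (rule order_tendstoD) (simp add: ennreal_zero_less_divide)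
      then show "eventually (\<lambda>n. F n < y) sequentially"
      proof (rule eventually_mono)
        fix n assume "(\<integral>\<^sup>+ x. epow A (S x) * indicator (E n) x \<partial>?R) < 1/2"
        then have sm: "(\<integral>\<^sup>+ x. epow A (S x) * indicator (E n) x \<partial>?R) \<le> 1/2" by simp
        have "F n \<le> ennreal l" unfolding F_def
          by (rule SUP_least, rule bound[OF l0 l1 _ sm[unfolded A_def]])
        then show "F n < y" using ly by simp
      qed
    qed
  qed
qed

end
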